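(* Under the standing assumptions in the context, let $\mathcal U$ be a sufficiently small neighborhood of $(0,\bar X)$ and let $\omega\subset\mathcal U\cap\{t>0\}$. Let $\phi>0$ be a bounded function on $\omega$ and suppose there is $C>0$ with \[ \phi^2 a\le C\Delta,\qquad \phi\,|\partial_t\Delta|\le C\Delta,\qquad \phi\,|\partial_t a|\le C a\qquad\text{on }\omega . \] Then there is $C'>0$ such that on $\omega$ \[ \phi^2\le C'\lambda_1,\qquad \phi\,|\partial_t\lambda_1|\le C'\lambda_1,\qquad \phi\,|\partial_t\lambda_2|\le C'\lambda_2 . \]
   Context: Let $W\subset\mathbb R^l$ be open, $\bar X\in W$, $c,T>0$, and let $a(t,X),b(t,X)$ be real-valued $C^\infty$ functions on $(-c,T)\times W$ with bounded derivatives of all orders. Assume $\Delta(t,X):=4a(t,X)^3-27b(t,X)^2\ge 0$ on $[0,T)\times W$, $a(0,\bar X)=0$, and $a(t,X)>0$ on $(0,T)\times W$. Let $S(t,X)=\begin{bmatrix}3&0&-a\\0&2a&3b\\-a&3b&a^2\end{bmatrix}$ and let $0\le\lambda_1\le\lambda_2\le\lambda_3$ be its eigenvalues (smooth on $\mathcal U\cap\{t>0\}$ for $\mathcal U$ a small neighborhood of $(0,\bar X)$). *)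

theory Defs
  imports "HOL-Analysis.Analysis" "HOL-Library.Multiset"
begin

definition dir_deriv :: "'a::real_normed_vector \<Rightarrow> ('a \<Rightarrow> real) \<Rightarrow> 'a \<Rightarrow> real" where
  "dir_deriv v f z = deriv (\<lambda>h. f (z + h *\<^sub>R v)) 0"

fun iter_partial :: "'a::real_normed_vector list \<Rightarrow> ('a \<Rightarrow> real) \<Rightarrow> 'a \<Rightarrow> real" where
  "iter_partial [] f = f"
| "iter_partial (v # vs) f = dir_deriv v (iter_partial vs f)"

definition smooth_bdd_on :: "'a::euclidean_space set \<Rightarrow> ('a \<Rightarrow> real) \<Rightarrow> bool" where
  "smooth_bdd_on U f \<longleftrightarrow>
     (\<forall>vs. set vs \<subseteq> Basis \<longrightarrow>
        continuous_on U (iter_partial vs f) \<and>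
        bounded (iter_partial vs f ` U) \<and>
        (\<forall>v\<in>Basis. \<forall>z\<in>U.
           ((\<lambda>h. iter_partial vs f (z + h *\<^sub>R v)) has_real_derivative
              iter_partial (v # vs) f z) (at 0)))"

text \<open>The matrix S(t,X) in terms of a = a(t,X), b = b(t,X).\<close>
definition Smat :: "real \<Rightarrow> real \<Rightarrow> real^3^3" where
  "Smat a b = vector [vector [3, 0, -a], vector [0, 2*a, 3*b], vector [-a, 3*b, a^2]]"

text \<open>Eigenvalues of a square real matrix counted with algebraic multiplicity:
  the multiset of roots of the characteristic polynomial det(mu I - M), when it splits over the reals.\<close>
definition eigen_mset :: "real^'n^'n \<Rightarrow> real multiset" where
  "eigen_mset M = (THE E. \<forall>\<mu>. det (\<mu> *\<^sub>R mat 1 - M) = (\<Prod>m\<in>#E. (\<mu> - m)))"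

text \<open>k-th smallest eigenvalue (k = 1,2,3), counted with multiplicity.\<close>
definition eig :: "nat \<Rightarrow> real^'n^'n \<Rightarrow> real" where
  "eig k M = sorted_list_of_multiset (eigen_mset M) ! (k - 1)"

definition Delta :: "real \<Rightarrow> real \<Rightarrow> real" where
  "Delta a b = 4 * a^3 - 27 * b^2"

end

theory Submission
  imports Defs "HOL-Computational_Algebra.Polynomial"
begin


definition Pc :: "real \<Rightarrow> real \<Rightarrow> real \<Rightarrow> real" where
  "Pc a b \<mu> = \<mu>^3 - (3 + 2*a + a^2) * \<mu>^2 + (6*a + 2*a^2 + 2*a^3 - 9*b^2) * \<mu> - Delta a b"

lemma det_Smat: "det (\<mu> *\<^sub>R mat 1 - Smat a b) = Pc a b \<mu>"
  unfolding det_3 Smat_def Pc_def Delta_def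
  by (simp add: mat_def vector_3 algebra_simps power2_eq_square power3_eq_cube)

lemma proots_lin_prod: "proots (\<Prod>m\<in>#E. [:-m, 1:]) = (E :: real multiset)"
proof (induction E)
  case empty then show ?case by simp
next
  case (add x E)
  have "(\<Prod>m\<in>#E. [:-m, 1::real:]) \<noteq> 0" by (auto simp add: prod_mset_zero_iff)
  have "proots (\<Prod>m\<in>#add_mset x E. [:-m, 1:]) = proots ([:-x,1:] * (\<Prod>m\<in>#E. [:-m, 1:]))" by simp
  also have "\<dots> = proots [:-x,1:] + proots (\<Prod>m\<in>#E. [:-m, 1:])"
    by (rule proots_mult) (use \<open>(\<Prod>m\<in>#E. [:-m, 1::real:]) \<noteq> 0\<close> in auto)
  also have "\<dots> = add_mset x E" using add by (metis proots_linear_factor minus_minus add_mset_add_single union_commute)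
  finally show ?case .
qed

lemma mset_prod_unique:
  fixes E F :: "real multiset"
  assumes "\<forall>\<mu>. (\<Prod>m\<in>#E. (\<mu> - m)) = (\<Prod>m\<in>#F. (\<mu> - m))"
  shows "E = F"
proof -
  have "poly (\<Prod>m\<in>#E. [:-m, 1:]) = poly (\<Prod>m\<in>#F. [:-m, 1:])"
    using assms by (simp add: poly_prod_mset fun_eq_iff)
  then have "(\<Prod>m\<in>#E. [:-m, 1:]) = (\<Prod>m\<in>#F. [:-m, 1:])" by (simp add: poly_eq_poly_eq_iff)
  then show ?thesis by (metis proots_lin_prod)
qed

lemma cubic_factor:
  fixes x1 x2 x3 A B D :: real
  assumes "x1 < x2" "x2 < x3"
    and h1: "x1^3 + A*x1^2 + B*x1 + D = 0"
    and h2: "x2^3 + A*x2^2 + B*x2 + D = 0"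
    and h3: "x3^3 + A*x3^2 + B*x3 + D = 0"
  shows "\<mu>^3 + A*\<mu>^2 + B*\<mu> + D = (\<mu>-x1)*(\<mu>-x2)*(\<mu>-x3)"
proof -
  have "(x1-x2)*(x1^2+x1*x2+x2^2 + A*(x1+x2) + B) = 0" using h1 h2 by algebra
  then have e12: "x1^2+x1*x2+x2^2 + A*(x1+x2) + B = 0" using assms by simp
  have "(x1-x3)*(x1^2+x1*x3+x3^2 + A*(x1+x3) + B) = 0" using h1 h3 by algebra
  then have e13: "x1^2+x1*x3+x3^2 + A*(x1+x3) + B = 0" using assms by simp
  have "(x2-x3)*(x1+x2+x3+A) = 0" using e12 e13 by algebra
  then have eA: "A = -(x1+x2+x3)" using assms by simp
  have eB: "B = x1*x2+x1*x3+x2*x3" using e12 eA by algebra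
  have eD: "D = -(x1*x2*x3)" using h1 eA eB by algebra
  show ?thesis unfolding eA eB eD by algebra
qed



lemma sorted3: "(r1::real) \<le> r2 \<Longrightarrow> r2 \<le> r3 \<Longrightarrow> sorted_list_of_multiset {#r1,r2,r3#} = [r1,r2,r3]"
proof -
  assume a: "r1 \<le> r2" "r2 \<le> r3"
  have "{#r1,r2,r3#} = mset [r1,r2,r3]" by simp
  moreover have "sort [r1,r2,r3] = [r1,r2,r3]" using a by (intro sorted_sort_id) simp
  ultimately show ?thesis by (metis sorted_list_of_multiset_mset)
qed

lemma eig_from_roots:
  fixes M :: "real^3^3"
  assumes "\<forall>\<mu>. det (\<mu> *\<^sub>R mat 1 - M) = (\<mu>-r1)*(\<mu>-r2)*(\<mu>-r3)" "r1 \<le> r2" "r2 \<le> r3"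
  shows "eig 1 M = r1" "eig 2 M = r2" "eig 3 M = r3"
proof -
  have t1: "(\<mu>-r1)*(\<mu>-r2)*(\<mu>-r3) = (\<Prod>m\<in>#{#r1,r2,r3#}. (\<mu> - m))" for \<mu>
    by (simp add: mult.assoc)
  have P: "\<forall>\<mu>. det (\<mu> *\<^sub>R mat 1 - M) = (\<Prod>m\<in>#{#r1,r2,r3#}. (\<mu> - m))"
    using assms(1) t1 by presburger
  have "eigen_mset M = {#r1,r2,r3#}"
    unfolding eigen_mset_def
  proof (rule the_equality)
    fix E assume E: "\<forall>\<mu>. det (\<mu> *\<^sub>R mat 1 - M) = (\<Prod>m\<in>#E. (\<mu> - m))"
    have "\<forall>\<mu>. (\<Prod>m\<in>#E. (\<mu> - m)) = (\<Prod>m\<in>#{#r1,r2,r3#}. (\<mu> - m))"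
      using E P by metis
    then show "E = {#r1,r2,r3#}" by (rule mset_prod_unique)
  qed (rule P)
  then have "sorted_list_of_multiset (eigen_mset M) = [r1,r2,r3]" using sorted3 assms by simp
  then show "eig 1 M = r1" "eig 2 M = r2" "eig 3 M = r3" unfolding eig_def by simp_all
qed

lemma roots_loc:
  assumes a0: "0 < a" and a1: "a \<le> 1/10" and D: "Delta a b \<ge> 0"
  shows "0 \<le> eig 1 (Smat a b) \<and> eig 1 (Smat a b) \<le> a^2 \<and>
         a \<le> eig 2 (Smat a b) \<and> eig 2 (Smat a b) \<le> 3*a \<and>
         2 \<le> eig 3 (Smat a b) \<and> eig 3 (Smat a b) \<le> 4 \<and>
         (\<forall>\<mu>. Pc a b \<mu> = (\<mu> - eig 1 (Smat a b))*(\<mu> - eig 2 (Smat a b))*(\<mu> - eig 3 (Smat a b)))"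
proof -
  have bb: "9*b^2 \<le> 4*a^3/3" using D unfolding Delta_def by simp
  have b0: "0 \<le> 9*b^2" by simp
  have a2: "a^2 \<le> a/10" using a0 a1 by (simp add: power2_eq_square mult_left_mono)
  have a3: "a^3 \<le> a^2/10" using a0 a1 by (simp add: power2_eq_square power3_eq_cube mult_left_mono)
  have a4: "a^4 \<le> a^3/10" using a0 a1 by (simp add: power3_eq_cube mult_left_mono power4_eq_xxxx)
  have cont: "continuous_on S (Pc a b)" for S unfolding Pc_def by (intro continuous_intros)
  have p0: "Pc a b 0 \<le> 0" using D unfolding Pc_def by simp
  have e1: "Pc a b (a^2) = 2*a^3 - a^4 + 9*b^2*(3-a^2)" unfolding Pc_def Delta_def by algebra
  have a3p: "0 < a^3" and a4p: "0 < a^4" and a2p: "0 < a^2" using a0 by simp_all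
  have "0 < 2*a^3 - a^4" using a4 a3p by linarith
  moreover have "0 \<le> 9*b^2*(3-a^2)" using a2 a1 by simp
  ultimately have p1: "0 \<le> Pc a b (a^2)" using e1 by linarith
  have e2: "Pc a b a = 3*a^2 - 3*a^3 + a^4 + 9*b^2*(3-a)" unfolding Pc_def Delta_def by algebra
  have "0 \<le> 9*b^2*(3-a)" using a1 b0 by simp
  then have p2: "0 \<le> Pc a b a" using e2 a3 a4p a2p by linarith
  have e3: "Pc a b (3*a) = -9*a^2 + 11*a^3 - 3*a^4 + 9*b^2*(3-3*a)" unfolding Pc_def Delta_def by algebra
  have "9*b^2*(3-3*a) \<le> 9*b^2*3" by (rule mult_left_mono) (use a0 b0 in auto)
  then have p3: "Pc a b (3*a) \<le> 0" using e3 a3 a4p bb a2p by linarith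
  have e4: "Pc a b 2 = -4 + 4*a + 9*b^2" unfolding Pc_def Delta_def by algebra
  have p4: "Pc a b 2 \<le> 0" using e4 bb a3 a2 a1 by linarith
  have e5: "Pc a b 4 = 16 - 8*a - 8*a^2 + 4*a^3 - 9*b^2" unfolding Pc_def Delta_def by algebra
  have p5: "0 \<le> Pc a b 4" using e5 bb a3 a2 a1 a0 a3p by linarith
  obtain r1 where r1: "0 \<le> r1" "r1 \<le> a^2" "Pc a b r1 = 0"
    using IVT'[of "Pc a b" 0 0 "a^2"] p0 p1 cont by auto
  obtain r2 where r2: "a \<le> r2" "r2 \<le> 3*a" "Pc a b r2 = 0"
    using IVT2'[of "Pc a b" "3*a" 0 a] p2 p3 cont a0 by auto
  obtain r3 where r3: "2 \<le> r3" "r3 \<le> 4" "Pc a b r3 = 0"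
    using IVT'[of "Pc a b" 2 0 4] p4 p5 cont by auto
  have o1: "r1 < r2" using r1 r2 a2 a0 by linarith
  have o2: "r2 < r3" using r2 r3 a1 by linarith
  have fac: "Pc a b \<mu> = (\<mu>-r1)*(\<mu>-r2)*(\<mu>-r3)" for \<mu>
  proof -
    let ?A = "-(3 + 2*a + a^2)" and ?B = "6*a + 2*a^2 + 2*a^3 - 9*b^2" and ?D = "- Delta a b"
    have eq: "Pc a b x = x^3 + ?A*x^2 + ?B*x + ?D" for x unfolding Pc_def by algebra
    have q1: "r1^3 + ?A*r1^2 + ?B*r1 + ?D = 0" using r1(3) eq[of r1] by simp
    have q2: "r2^3 + ?A*r2^2 + ?B*r2 + ?D = 0" using r2(3) eq[of r2] by simp
    have q3: "r3^3 + ?A*r3^2 + ?B*r3 + ?D = 0" using r3(3) eq[of r3] by simp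
    show ?thesis unfolding eq by (rule cubic_factor[OF o1 o2 q1 q2 q3])
  qed
  have "eig 1 (Smat a b) = r1" "eig 2 (Smat a b) = r2" "eig 3 (Smat a b) = r3"
    using eig_from_roots[of "Smat a b" r1 r2 r3] fac o1 o2 by (simp_all add: det_Smat)
  then show ?thesis using r1 r2 r3 fac by simp
qed



lemma root_cont:
  fixes f Q G :: "real \<Rightarrow> real"
  assumes Qc: "isCont Q t" and ev: "eventually (\<lambda>s. Q s = (f t - f s) * G s \<and> m \<le> \<bar>G s\<bar>) (nhds t)"
    and m: "m > 0"
  shows "isCont f t"
proof -
  have Qt: "Q t = 0" using ev by (simp add: eventually_nhds_conv_at)
  have ev': "eventually (\<lambda>s. Q s = (f t - f s) * G s \<and> m \<le> \<bar>G s\<bar>) (at t)"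
    using ev by (simp add: eventually_nhds_conv_at)
  have "eventually (\<lambda>s. norm (f s - f t) \<le> \<bar>Q s\<bar> / m) (at t)"
    using ev'
  proof (rule eventually_mono)
    fix s assume h: "Q s = (f t - f s) * G s \<and> m \<le> \<bar>G s\<bar>"
    have "\<bar>f s - f t\<bar> * m \<le> \<bar>f s - f t\<bar> * \<bar>G s\<bar>" using h by (simp add: mult_left_mono)
    also have "\<dots> = \<bar>Q s\<bar>" using h by (simp add: abs_mult abs_minus_commute)
    finally show "norm (f s - f t) \<le> \<bar>Q s\<bar> / m" using m by (simp add: field_simps)
  qed
  moreover have "((\<lambda>s. \<bar>Q s\<bar> / m) \<longlongrightarrow> 0) (at t)"
  proof -
    have "((\<lambda>s. \<bar>Q s\<bar> / m) \<longlongrightarrow> \<bar>Q t\<bar> / m) (at t)"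
      using Qc m unfolding isCont_def by (intro tendsto_intros) auto
    then show ?thesis using Qt by simp
  qed
  ultimately have "((\<lambda>s. f s - f t) \<longlongrightarrow> 0) (at t)" by (rule Lim_null_comparison)
  then show ?thesis unfolding isCont_def by (simp add: LIM_zero_iff)
qed

lemma root_deriv:
  fixes f Q G :: "real \<Rightarrow> real"
  assumes QD: "(Q has_real_derivative Qd) (at t)"
    and ev: "eventually (\<lambda>s. Q s = (f t - f s) * G s) (nhds t)"
    and Gc: "isCont G t" and Gt: "G t \<noteq> 0"
  shows "(f has_real_derivative (- Qd / G t)) (at t)"
proof -
  have Qt: "Q t = 0" using ev by (simp add: eventually_nhds_conv_at)
  obtain gQ where gQ: "\<forall>z. Q z - Q t = gQ z * (z - t)" "isCont gQ t" "gQ t = Qd"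
    using QD CARAT_DERIV by blast
  define fh where "fh z = f t - Q z / G z" for z
  have "(fh has_real_derivative (- Qd / G t)) (at t)"
    unfolding CARAT_DERIV
  proof (intro exI conjI allI)
    fix z
    show "fh z - fh t = (- (gQ z / G z)) * (z - t)"
      using gQ(1) Qt unfolding fh_def by (simp add: field_simps)
  next
    show "isCont (\<lambda>z. - (gQ z / G z)) t" using gQ(2) Gc Gt by (intro continuous_intros) auto
  next
    show "- (gQ t / G t) = - Qd / G t" using gQ(3) by simp
  qed
  moreover have "eventually (\<lambda>z. G z \<noteq> 0) (nhds t)"
  proof -
    have "((\<lambda>z. \<bar>G z\<bar>) \<longlongrightarrow> \<bar>G t\<bar>) (at t)" using Gc unfolding isCont_def by (intro tendsto_intros)
    then have "eventually (\<lambda>z. 0 < \<bar>G z\<bar>) (at t)" using Gt by (intro order_tendstoD) auto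
    then show ?thesis using Gt unfolding eventually_nhds_conv_at by (auto elim: eventually_mono)
  qed
  then have "eventually (\<lambda>z. f z = fh z) (nhds t)"
    using ev by eventually_elim (simp add: fh_def field_simps)
  ultimately show ?thesis by (subst DERIV_cong_ev[where g=fh]) auto
qed



definition Pdf :: "real \<Rightarrow> real \<Rightarrow> real \<Rightarrow> real \<Rightarrow> real \<Rightarrow> real" where
  "Pdf a b da db \<mu> = -(2*da + 2*a*da)*\<mu>^2 + (6*da + 4*a*da + 6*a^2*da - 18*b*db)*\<mu> - (12*a^2*da - 54*b*db)"

lemma tri4:
  fixes x1 x2 u y z w :: real
  assumes "0 \<le> x1" "0 \<le> x2" "0 \<le> u"
  shows "\<bar>-(x1)*y + x2*y - u*z - w\<bar> \<le> x1*\<bar>y\<bar> + x2*\<bar>y\<bar> + u*\<bar>z\<bar> + \<bar>w\<bar>"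
proof -
  have "\<bar>-(x1*y) + x2*y - u*z - w\<bar> \<le> \<bar>x1*y\<bar> + \<bar>x2*y\<bar> + \<bar>u*z\<bar> + \<bar>w\<bar>" by arith
  then show ?thesis using assms by (simp add: abs_mult)
qed

lemma gen_bound:
  fixes a b da db p C B K \<mu> :: real
  assumes a0: "0 < a" and a1: "a \<le> 1/10" and D: "Delta a b \<ge> 0"
    and m0: "0 \<le> \<mu>" and m1: "\<mu> \<le> 1"
    and p0: "0 < p" and pB: "p \<le> B" and K: "\<bar>db\<bar> \<le> K"
    and h2: "p * \<bar>12*a^2*da - 54*b*db\<bar> \<le> C * Delta a b"
    and h3: "p * \<bar>da\<bar> \<le> C * a"
  shows "p * \<bar>Pdf a b da db \<mu>\<bar> \<le> a*\<mu>*(10*C + 18*\<bar>B\<bar>*K) + C * Delta a b"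
proof -
  have "b^2 \<le> a^2"
  proof -
    have "27*b^2 \<le> 4*a^3" using D unfolding Delta_def by simp
    moreover have "a^3 \<le> a^2" using a0 a1 by (simp add: power2_eq_square power3_eq_cube mult_left_mono)
    moreover have "0 \<le> b^2" "0 \<le> a^3" using a0 by simp_all
    ultimately show ?thesis by linarith
  qed
  then have ba: "\<bar>b\<bar> \<le> a" using a0 by (simp add: abs_le_square_iff[symmetric])
  have pbdb: "p * (\<bar>b\<bar> * \<bar>db\<bar>) \<le> \<bar>B\<bar> * (a * K)"
    by (rule mult_mono) (use pB ba K p0 in \<open>auto intro: mult_mono\<close>)
  have eq: "p * Pdf a b da db \<mu> = -((2 + 2*a)*\<mu>^2) * (p*da) + ((6 + 4*a + 6*a^2)*\<mu>) * (p*da)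
      - 18*\<mu>*(p*(b*db)) - p*(12*a^2*da - 54*b*db)"
    unfolding Pdf_def by algebra
  have "p * \<bar>Pdf a b da db \<mu>\<bar> = \<bar>p * Pdf a b da db \<mu>\<bar>" using p0 by (simp add: abs_mult)
  also have "\<dots> \<le> ((2 + 2*a)*\<mu>^2) * (p*\<bar>da\<bar>) + ((6 + 4*a + 6*a^2)*\<mu>) * (p*\<bar>da\<bar>)
      + 18*\<mu>*(p*(\<bar>b\<bar>*\<bar>db\<bar>)) + p*\<bar>12*a^2*da - 54*b*db\<bar>"
    unfolding eq
  proof -
    have "\<bar>-((2 + 2*a)*\<mu>^2) * (p*da) + ((6 + 4*a + 6*a^2)*\<mu>) * (p*da)
      - (18*\<mu>)*(p*(b*db)) - p*(12*a^2*da - 54*b*db)\<bar> \<le> ((2 + 2*a)*\<mu>^2) * \<bar>p*da\<bar> + ((6 + 4*a + 6*a^2)*\<mu>) * \<bar>p*da\<bar>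
      + (18*\<mu>)*\<bar>p*(b*db)\<bar> + \<bar>p*(12*a^2*da - 54*b*db)\<bar>"
      by (rule tri4) (use a0 m0 in auto)
    then show "\<bar>-((2 + 2*a)*\<mu>^2) * (p*da) + ((6 + 4*a + 6*a^2)*\<mu>) * (p*da)
      - 18*\<mu>*(p*(b*db)) - p*(12*a^2*da - 54*b*db)\<bar> \<le> ((2 + 2*a)*\<mu>^2) * (p*\<bar>da\<bar>) + ((6 + 4*a + 6*a^2)*\<mu>) * (p*\<bar>da\<bar>)
      + 18*\<mu>*(p*(\<bar>b\<bar>*\<bar>db\<bar>)) + p*\<bar>12*a^2*da - 54*b*db\<bar>"
      using p0 by (simp add: abs_mult mult.assoc)
  qed
  also have "\<dots> \<le> (3*\<mu>) * (C*a) + (7*\<mu>) * (C*a) + 18*\<mu>*(\<bar>B\<bar> * (a * K)) + C * Delta a b"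
  proof -
    have "(2 + 2*a)*\<mu>^2 \<le> 3*\<mu>"
    proof -
      have "\<mu>^2 \<le> \<mu>" using m0 m1 by (simp add: power2_eq_square mult_left_le)
      then have "(2 + 2*a)*\<mu>^2 \<le> (2+2*a)*\<mu>" using a0 by (simp add: mult_left_mono)
      also have "\<dots> \<le> 3*\<mu>" using a1 m0 by (simp add: mult_right_mono)
      finally show ?thesis .
    qed
    then have t1: "((2 + 2*a)*\<mu>^2) * (p*\<bar>da\<bar>) \<le> (3*\<mu>) * (C*a)"
      using h3 p0 m0 a0 by (rule_tac mult_mono) auto
    have "a^2 \<le> (1/10)^2" using power_mono[OF a1, of 2] a0 by simp
    then have "6 + 4*a + 6*a^2 \<le> 7" using a1 by (simp add: power2_eq_square)
    then have "(6 + 4*a + 6*a^2)*\<mu> \<le> 7*\<mu>" using m0 by (simp add: mult_right_mono)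
    then have t2: "((6 + 4*a + 6*a^2)*\<mu>) * (p*\<bar>da\<bar>) \<le> (7*\<mu>) * (C*a)"
      using h3 p0 m0 a0 by (rule_tac mult_mono) auto
    have t3: "18*\<mu>*(p*(\<bar>b\<bar>*\<bar>db\<bar>)) \<le> 18*\<mu>*(\<bar>B\<bar> * (a * K))"
      using pbdb m0 by (simp add: mult_left_mono)
    show ?thesis using t1 t2 t3 h2 by linarith
  qed
  also have "\<dots> = a*\<mu>*(10*C + 18*\<bar>B\<bar>*K) + C * Delta a b" by algebra
  finally show ?thesis .
qed

lemma prod_lb:
  fixes x y a :: real
  assumes "9*a/10 \<le> \<bar>x\<bar>" "10/9 \<le> \<bar>y\<bar>" "0 < a"
  shows "a \<le> \<bar>x*y\<bar>"
proof -
  have "(9*a/10)*(10/9) \<le> \<bar>x\<bar>*\<bar>y\<bar>" by (rule mult_mono) (use assms in auto)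
  then show ?thesis by (simp add: abs_mult)
qed

lemma quot_bound:
  fixes p P G a y :: real
  assumes "0 < p" "p*\<bar>P\<bar> \<le> a*y" "a \<le> \<bar>G\<bar>" "0 < a"
  shows "p*\<bar>-P/G\<bar> \<le> y"
proof -
  have "p*\<bar>-P/G\<bar> = (p*\<bar>P\<bar>)/\<bar>G\<bar>" by (simp add: abs_divide)
  also have "\<dots> \<le> (a*y)/\<bar>G\<bar>" using assms by (simp add: divide_right_mono)
  also have "\<dots> \<le> (a*y)/a"
  proof (rule divide_left_mono)
    have "0 \<le> p*\<bar>P\<bar>" using assms by simp
    then show "0 \<le> a*y" using assms by linarith
  qed (use assms in auto)
  also have "\<dots> = y" using assms by simp
  finally show ?thesis .
qed

lemma final_ineq:
  fixes a b da db p C B K l1 l2 l3 :: real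
  assumes a0: "0 < a" and a1: "a \<le> 1/10" and D: "Delta a b \<ge> 0"
    and l1: "0 \<le> l1" "l1 \<le> a^2" and l2: "a \<le> l2" "l2 \<le> 3*a" and l3: "2 \<le> l3" "l3 \<le> 4"
    and prod: "Delta a b = l1*l2*l3"
    and p0: "0 < p" and pB: "p \<le> B" and K: "\<bar>db\<bar> \<le> K" and C0: "C > 0"
    and h1: "p^2 * a \<le> C * Delta a b"
    and h2: "p * \<bar>12*a^2*da - 54*b*db\<bar> \<le> C * Delta a b"
    and h3: "p * \<bar>da\<bar> \<le> C * a"
  shows "p^2 \<le> (22*C + 18*\<bar>B\<bar>*K) * l1 \<and>
         p * \<bar>- Pdf a b da db l1 / ((l1 - l2)*(l1 - l3))\<bar> \<le> (22*C + 18*\<bar>B\<bar>*K) * l1 \<and>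
         p * \<bar>- Pdf a b da db l2 / ((l2 - l1)*(l2 - l3))\<bar> \<le> (22*C + 18*\<bar>B\<bar>*K) * l2"
proof -
  have K0: "0 \<le> K" using K by linarith
  have a2: "a^2 \<le> a/10" using a0 a1 by (simp add: power2_eq_square mult_left_mono)
  have Dle: "Delta a b \<le> 12*a*l1"
  proof -
    have "l1*l2*l3 \<le> l1*(3*a)*4" using l1 l2 l3 a0 by (intro mult_mono) auto
    then show ?thesis using prod by (simp add: algebra_simps)
  qed
  have CDle: "C * Delta a b \<le> 12*C*a*l1" using Dle C0 by (simp add: mult_left_mono)
  have c1: "p^2 \<le> 12*C*l1"
  proof -
    have "p^2 * a \<le> (12*C*l1) * a" using h1 CDle by (simp add: algebra_simps)
    then show ?thesis using a0 by simp
  qed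
  have c1': "12*C*l1 \<le> (22*C + 18*\<bar>B\<bar>*K) * l1" using C0 K0 l1 by (intro mult_right_mono) auto
  have gb1: "p * \<bar>Pdf a b da db l1\<bar> \<le> a*l1*(10*C + 18*\<bar>B\<bar>*K) + C * Delta a b"
    by (rule gen_bound[OF a0 a1 D l1(1) _ p0 pB K h2 h3]) (use l1 a2 a1 in simp)
  then have gb1': "p * \<bar>Pdf a b da db l1\<bar> \<le> a*((22*C + 18*\<bar>B\<bar>*K) * l1)"
    using CDle by (simp add: algebra_simps)
  have G1: "a \<le> \<bar>(l1 - l2)*(l1 - l3)\<bar>" using l1 l2 l3 a2 a1 a0 by (intro prod_lb) auto
  have gb2: "p * \<bar>Pdf a b da db l2\<bar> \<le> a*l2*(10*C + 18*\<bar>B\<bar>*K) + C * Delta a b"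
    by (rule gen_bound[OF a0 a1 D _ _ p0 pB K h2 h3]) (use l2 a1 a0 in simp_all)
  have "12*C*a*l1 \<le> 12*C*a*l2" using l1 l2 a2 a1 a0 C0 by (intro mult_left_mono) auto
  then have gb2': "p * \<bar>Pdf a b da db l2\<bar> \<le> a*((22*C + 18*\<bar>B\<bar>*K) * l2)"
    using gb2 CDle by (simp add: algebra_simps)
  have G2: "a \<le> \<bar>(l2 - l1)*(l2 - l3)\<bar>" using l1 l2 l3 a2 a1 a0 by (intro prod_lb) auto
  show ?thesis
    using c1 c1' quot_bound[OF p0 gb1' G1 a0] quot_bound[OF p0 gb2' G2 a0] by linarith
qed



lemma prod_lb1:
  fixes x y m :: real
  assumes "m \<le> \<bar>x\<bar>" "1 \<le> \<bar>y\<bar>" "0 \<le> m"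
  shows "m \<le> \<bar>x*y\<bar>"
proof -
  have "m*1 \<le> \<bar>x\<bar>*\<bar>y\<bar>" by (rule mult_mono) (use assms in auto)
  then show ?thesis by (simp add: abs_mult)
qed

lemma Pc_deriv:
  assumes dA: "(A has_real_derivative dA) (at t)" and dB: "(B has_real_derivative dB) (at t)"
  shows "((\<lambda>s. Pc (A s) (B s) \<mu>) has_real_derivative Pdf (A t) (B t) dA dB \<mu>) (at t)"
  unfolding Pc_def Delta_def Pdf_def
  by (rule derivative_eq_intros refl dA dB | simp)+ (simp add: algebra_simps power2_eq_square power3_eq_cube)

lemma point_analysis:
  fixes A B :: "real \<Rightarrow> real"
  assumes dA: "(A has_real_derivative dA) (at t)" and dB: "(B has_real_derivative dB) (at t)"
    and good: "eventually (\<lambda>s. 0 < A s \<and> A s \<le> 1/10 \<and> Delta (A s) (B s) \<ge> 0) (nhds t)"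
  defines "l1 \<equiv> \<lambda>s. eig 1 (Smat (A s) (B s))"
      and "l2 \<equiv> \<lambda>s. eig 2 (Smat (A s) (B s))"
      and "l3 \<equiv> \<lambda>s. eig 3 (Smat (A s) (B s))"
  shows "(l1 has_real_derivative
           (- Pdf (A t) (B t) dA dB (l1 t) / ((l1 t - l2 t)*(l1 t - l3 t)))) (at t)"
    and "(l2 has_real_derivative
           (- Pdf (A t) (B t) dA dB (l2 t) / ((l2 t - l1 t)*(l2 t - l3 t)))) (at t)"
proof -
  have RL: "eventually (\<lambda>s. 0 \<le> l1 s \<and> l1 s \<le> (A s)^2 \<and> A s \<le> l2 s \<and> l2 s \<le> 3*A s \<and>
       2 \<le> l3 s \<and> l3 s \<le> 4 \<and> 0 < A s \<and> A s \<le> 1/10 \<and>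
       (\<forall>\<mu>. Pc (A s) (B s) \<mu> = (\<mu> - l1 s)*(\<mu> - l2 s)*(\<mu> - l3 s))) (nhds t)"
    using good by eventually_elim (use roots_loc in \<open>auto simp: l1_def l2_def l3_def\<close>)
  then have RLt: "0 \<le> l1 t \<and> l1 t \<le> (A t)^2 \<and> A t \<le> l2 t \<and> l2 t \<le> 3*A t \<and>
       2 \<le> l3 t \<and> l3 t \<le> 4 \<and> 0 < A t \<and> A t \<le> 1/10"
    by (simp add: eventually_nhds_conv_at)
  define \<alpha> where "\<alpha> = A t"
  have \<alpha>0: "0 < \<alpha>" using RLt \<alpha>_def by simp
  have Ac: "isCont A t" using dA by (rule DERIV_isCont)
  have Aev: "eventually (\<lambda>s. \<alpha>/2 \<le> A s \<and> A s \<le> 2*\<alpha>) (nhds t)"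
  proof -
    have "(A \<longlongrightarrow> \<alpha>) (at t)" using Ac \<alpha>_def by (simp add: isCont_def)
    have e1: "eventually (\<lambda>s. \<alpha>/2 < A s) (at t)"
      by (rule order_tendstoD(1)[OF \<open>(A \<longlongrightarrow> \<alpha>) (at t)\<close>]) (use \<alpha>0 in simp)
    have e2: "eventually (\<lambda>s. A s < 2*\<alpha>) (at t)"
      by (rule order_tendstoD(2)[OF \<open>(A \<longlongrightarrow> \<alpha>) (at t)\<close>]) (use \<alpha>0 in simp)
    from e1 e2
    have "eventually (\<lambda>s. \<alpha>/2 \<le> A s \<and> A s \<le> 2*\<alpha>) (at t)"
      by eventually_elim auto
    then show ?thesis using \<alpha>0 \<alpha>_def unfolding eventually_nhds_conv_at by simp
  qed
  have QD: "((\<lambda>s. Pc (A s) (B s) \<mu>) has_real_derivative Pdf (A t) (B t) dA dB \<mu>) (at t)" for \<mu>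
    by (rule Pc_deriv[OF dA dB])
  have Qc: "isCont (\<lambda>s. Pc (A s) (B s) \<mu>) t" for \<mu> using QD by (rule DERIV_isCont)
  have a2: "\<alpha>^2 \<le> \<alpha>/10" using \<alpha>0 RLt \<alpha>_def by (simp add: power2_eq_square mult_left_mono)
  have c1: "isCont l1 t"
  proof (rule root_cont[OF Qc, where m="2*\<alpha>/5" and G="\<lambda>s. (l1 t - l2 s)*(l1 t - l3 s)"])
    show "eventually (\<lambda>s. Pc (A s) (B s) (l1 t) = (l1 t - l1 s) * ((l1 t - l2 s)*(l1 t - l3 s))
        \<and> 2*\<alpha>/5 \<le> \<bar>(l1 t - l2 s)*(l1 t - l3 s)\<bar>) (nhds t)"
      using RL Aev
    proof eventually_elim
      case (elim s)
      have "2*\<alpha>/5 \<le> \<bar>l1 t - l2 s\<bar>" using elim RLt a2 \<alpha>_def by auto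
      moreover have "1 \<le> \<bar>l1 t - l3 s\<bar>" using elim RLt a2 \<alpha>_def by auto
      ultimately have "2*\<alpha>/5 \<le> \<bar>(l1 t - l2 s)*(l1 t - l3 s)\<bar>" using \<alpha>0 by (intro prod_lb1) auto
      moreover have "Pc (A s) (B s) (l1 t) = (l1 t - l1 s)*(l1 t - l2 s)*(l1 t - l3 s)" using elim by blast
      ultimately show ?case by (simp add: ac_simps)
    qed
  qed (use \<alpha>0 in simp)
  have c2: "isCont l2 t"
  proof (rule root_cont[OF Qc, where m="4*\<alpha>/5" and G="\<lambda>s. (l2 t - l1 s)*(l2 t - l3 s)"])
    show "eventually (\<lambda>s. Pc (A s) (B s) (l2 t) = (l2 t - l2 s) * ((l2 t - l1 s)*(l2 t - l3 s))
        \<and> 4*\<alpha>/5 \<le> \<bar>(l2 t - l1 s)*(l2 t - l3 s)\<bar>) (nhds t)"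
      using RL Aev
    proof eventually_elim
      case (elim s)
      have "(A s)^2 \<le> A s / 10" using elim by (simp add: power2_eq_square mult_left_mono)
      then have "4*\<alpha>/5 \<le> \<bar>l2 t - l1 s\<bar>" using elim RLt \<alpha>_def by auto
      moreover have "1 \<le> \<bar>l2 t - l3 s\<bar>" using elim RLt by auto
      ultimately have "4*\<alpha>/5 \<le> \<bar>(l2 t - l1 s)*(l2 t - l3 s)\<bar>" using \<alpha>0 by (intro prod_lb1) auto
      moreover have "Pc (A s) (B s) (l2 t) = (l2 t - l1 s)*(l2 t - l2 s)*(l2 t - l3 s)" using elim by blast
      ultimately show ?case by (simp add: ac_simps)
    qed
  qed (use \<alpha>0 in simp)
  have c3: "isCont l3 t"
  proof (rule root_cont[OF Qc, where m="1" and G="\<lambda>s. (l3 t - l1 s)*(l3 t - l2 s)"])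
    show "eventually (\<lambda>s. Pc (A s) (B s) (l3 t) = (l3 t - l3 s) * ((l3 t - l1 s)*(l3 t - l2 s))
        \<and> 1 \<le> \<bar>(l3 t - l1 s)*(l3 t - l2 s)\<bar>) (nhds t)"
      using RL
    proof eventually_elim
      case (elim s)
      have "(A s)^2 \<le> A s / 10" using elim by (simp add: power2_eq_square mult_left_mono)
      then have "1 \<le> \<bar>l3 t - l1 s\<bar>" using elim RLt by auto
      moreover have "1 \<le> \<bar>l3 t - l2 s\<bar>" using elim RLt by auto
      ultimately have "1 \<le> \<bar>(l3 t - l1 s)*(l3 t - l2 s)\<bar>" by (intro prod_lb1) auto
      moreover have "Pc (A s) (B s) (l3 t) = (l3 t - l1 s)*(l3 t - l2 s)*(l3 t - l3 s)" using elim by blast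
      ultimately show ?case by (simp add: ac_simps)
    qed
  qed simp
  have o1: "l1 t < l2 t" and o2: "l2 t < l3 t" using RLt a2 \<alpha>_def by auto
  show "(l1 has_real_derivative
           (- Pdf (A t) (B t) dA dB (l1 t) / ((l1 t - l2 t)*(l1 t - l3 t)))) (at t)"
  proof (rule root_deriv[OF QD, where G="\<lambda>s. (l1 t - l2 s)*(l1 t - l3 s)"])
    show "eventually (\<lambda>s. Pc (A s) (B s) (l1 t) = (l1 t - l1 s) * ((l1 t - l2 s)*(l1 t - l3 s))) (nhds t)"
      using RL
    proof eventually_elim
      case (elim s)
      then have "Pc (A s) (B s) (l1 t) = (l1 t - l1 s)*(l1 t - l2 s)*(l1 t - l3 s)" by blast
      then show ?case by (simp add: ac_simps)
    qed
    show "isCont (\<lambda>s. (l1 t - l2 s)*(l1 t - l3 s)) t" using c2 c3 by (intro continuous_intros)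
    show "(l1 t - l2 t)*(l1 t - l3 t) \<noteq> 0" using o1 o2 by simp
  qed
  show "(l2 has_real_derivative
           (- Pdf (A t) (B t) dA dB (l2 t) / ((l2 t - l1 t)*(l2 t - l3 t)))) (at t)"
  proof (rule root_deriv[OF QD, where G="\<lambda>s. (l2 t - l1 s)*(l2 t - l3 s)"])
    show "eventually (\<lambda>s. Pc (A s) (B s) (l2 t) = (l2 t - l2 s) * ((l2 t - l1 s)*(l2 t - l3 s))) (nhds t)"
      using RL
    proof eventually_elim
      case (elim s)
      then have "Pc (A s) (B s) (l2 t) = (l2 t - l1 s)*(l2 t - l2 s)*(l2 t - l3 s)" by blast
      then show ?case by (simp add: ac_simps)
    qed
    show "isCont (\<lambda>s. (l2 t - l1 s)*(l2 t - l3 s)) t" using c1 c3 by (intro continuous_intros)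
    show "(l2 t - l1 t)*(l2 t - l3 t) \<noteq> 0" using o1 o2 by simp
  qed
qed



theorem lemma3p1:
  fixes a b :: "real \<Rightarrow> real^'l \<Rightarrow> real"
    and W :: "(real^'l) set" and Xbar :: "real^'l" and c T :: real
  assumes W_open: "open W" and Xbar_in: "Xbar \<in> W"
    and c_pos: "c > 0" and T_pos: "T > 0"
    and a_smooth: "smooth_bdd_on ({-c<..<T} \<times> W) (\<lambda>(t, X). a t X)"
    and b_smooth: "smooth_bdd_on ({-c<..<T} \<times> W) (\<lambda>(t, X). b t X)"
    and Delta_nonneg: "\<And>t X. t \<in> {0..<T} \<Longrightarrow> X \<in> W \<Longrightarrow> Delta (a t X) (b t X) \<ge> 0"
    and a_zero: "a 0 Xbar = 0"
    and a_pos: "\<And>t X. t \<in> {0<..<T} \<Longrightarrow> X \<in> W \<Longrightarrow> a t X > 0"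
  shows "\<exists>U. open U \<and> (0, Xbar) \<in> U \<and> U \<subseteq> {-c<..<T} \<times> W \<and>
    (\<forall>(t, X)\<in>U. t > 0 \<longrightarrow>
       (\<exists>D. ((\<lambda>s. eig 1 (Smat (a s X) (b s X))) has_real_derivative D) (at t)) \<and>
       (\<exists>D. ((\<lambda>s. eig 2 (Smat (a s X) (b s X))) has_real_derivative D) (at t))) \<and>
    (\<forall>\<omega> (\<phi> :: real \<times> (real^'l) \<Rightarrow> real) C.
       \<omega> \<subseteq> U \<inter> {(t, X). t > 0} \<longrightarrow>
       (\<forall>z\<in>\<omega>. \<phi> z > 0) \<longrightarrow>
       (\<exists>B. \<forall>z\<in>\<omega>. \<phi> z \<le> B) \<longrightarrow>
       C > 0 \<longrightarrow>
       (\<forall>(t, X)\<in>\<omega>.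
          (\<phi> (t, X))^2 * a t X \<le> C * Delta (a t X) (b t X) \<and>
          \<phi> (t, X) * \<bar>deriv (\<lambda>s. Delta (a s X) (b s X)) t\<bar> \<le> C * Delta (a t X) (b t X) \<and>
          \<phi> (t, X) * \<bar>deriv (\<lambda>s. a s X) t\<bar> \<le> C * a t X) \<longrightarrow>
       (\<exists>C'>0. \<forall>(t, X)\<in>\<omega>.
          (\<phi> (t, X))^2 \<le> C' * eig 1 (Smat (a t X) (b t X)) \<and>
          \<phi> (t, X) * \<bar>deriv (\<lambda>s. eig 1 (Smat (a s X) (b s X))) t\<bar>
             \<le> C' * eig 1 (Smat (a t X) (b t X)) \<and>
          \<phi> (t, X) * \<bar>deriv (\<lambda>s. eig 2 (Smat (a s X) (b s X))) t\<bar>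
             \<le> C' * eig 2 (Smat (a t X) (b t X))))"
proof -
  define fa where "fa = (\<lambda>(t::real, X::real^'l). a t X)"
  define fb where "fb = (\<lambda>(t::real, X::real^'l). b t X)"
  define \<Omega> where "\<Omega> = {-c<..<T} \<times> W"
  define e1 :: "real \<times> (real^'l)" where "e1 = (1, 0)"
  have e1B: "e1 \<in> Basis" unfolding e1_def by (simp add: Basis_prod_def)
  have Om: "open \<Omega>" unfolding \<Omega>_def using W_open by (intro open_Times) auto
  have sa: "continuous_on \<Omega> fa"
    and sa2: "\<And>z. z \<in> \<Omega> \<Longrightarrow> ((\<lambda>h. fa (z + h *\<^sub>R e1)) has_real_derivative iter_partial [e1] fa z) (at 0)"
    using a_smooth[unfolded smooth_bdd_on_def, rule_format, of "[]"] e1B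
    unfolding fa_def \<Omega>_def by auto
  have sb2: "\<And>z. z \<in> \<Omega> \<Longrightarrow> ((\<lambda>h. fb (z + h *\<^sub>R e1)) has_real_derivative iter_partial [e1] fb z) (at 0)"
    using b_smooth[unfolded smooth_bdd_on_def, rule_format, of "[]"] e1B
    unfolding fb_def \<Omega>_def by auto
  have "bounded (iter_partial [e1] fb ` \<Omega>)"
    using b_smooth[unfolded smooth_bdd_on_def, rule_format, of "[e1]"] e1B
    unfolding fb_def \<Omega>_def by auto
  then obtain K where K: "\<And>z. z \<in> \<Omega> \<Longrightarrow> \<bar>iter_partial [e1] fb z\<bar> \<le> K"
    unfolding bounded_pos by auto
  define da where "da t X = iter_partial [e1] fa (t, X)" for t X
  define db where "db t X = iter_partial [e1] fb (t, X)" for t X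
  have shift: "(t, X) + h *\<^sub>R e1 = (h + t, X)" for t h :: real and X :: "real^'l"
    unfolding e1_def by simp
  have dA: "((\<lambda>s. a s X) has_real_derivative da t X) (at t)" if "t \<in> {-c<..<T}" "X \<in> W" for t X
  proof -
    have "((\<lambda>h. a (h + t) X) has_real_derivative da t X) (at 0)"
      using sa2[of "(t, X)"] that unfolding \<Omega>_def da_def by (simp add: shift fa_def)
    then show ?thesis using DERIV_shift[of "\<lambda>s. a s X" "da t X" 0 t] by simp
  qed
  have dB: "((\<lambda>s. b s X) has_real_derivative db t X) (at t)" if "t \<in> {-c<..<T}" "X \<in> W" for t X
  proof -
    have "((\<lambda>h. b (h + t) X) has_real_derivative db t X) (at 0)"
      using sb2[of "(t, X)"] that unfolding \<Omega>_def db_def by (simp add: shift fb_def)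
    then show ?thesis using DERIV_shift[of "\<lambda>s. b s X" "db t X" 0 t] by simp
  qed
  define U where "U = fa -` {..<1/10} \<inter> \<Omega>"
  have Uopen: "open U" using sa Om unfolding U_def continuous_on_open_vimage[OF Om] by auto
  have U0: "(0, Xbar) \<in> U" unfolding U_def \<Omega>_def fa_def using a_zero Xbar_in c_pos T_pos by simp
  have Usub: "U \<subseteq> {-c<..<T} \<times> W" unfolding U_def \<Omega>_def by auto
  have Umem: "t \<in> {-c<..<T} \<and> X \<in> W \<and> a t X < 1/10" if "(t, X) \<in> U" for t X
    using that unfolding U_def \<Omega>_def fa_def by auto
  have good: "eventually (\<lambda>s. 0 < a s X \<and> a s X \<le> 1/10 \<and> Delta (a s X) (b s X) \<ge> 0) (nhds t)"
    if "(t, X) \<in> U" "t > 0" for t X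
  proof -
    have tU: "t \<in> {-c<..<T}" "X \<in> W" "a t X < 1/10" using Umem[OF that(1)] by auto
    have e1: "eventually (\<lambda>s. s \<in> {0<..<T}) (nhds t)"
      using tU that(2) by (intro eventually_nhds_in_open) auto
    have "isCont (\<lambda>s. a s X) t" using dA[OF tU(1,2)] by (rule DERIV_isCont)
    then have "((\<lambda>s. a s X) \<longlongrightarrow> a t X) (at t)" by (simp add: isCont_def)
    then have "eventually (\<lambda>s. a s X < 1/10) (at t)" using tU(3) by (rule order_tendstoD(2))
    then have e2: "eventually (\<lambda>s. a s X < 1/10) (nhds t)" using tU(3) by (simp add: eventually_nhds_conv_at)
    from e1 e2 show ?thesis
    proof eventually_elim
      case (elim s)
      then show ?case using a_pos[of s X] Delta_nonneg[of s X] tU by auto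
    qed
  qed
  have PA: "((\<lambda>s. eig 1 (Smat (a s X) (b s X))) has_real_derivative
           (- Pdf (a t X) (b t X) (da t X) (db t X) (eig 1 (Smat (a t X) (b t X))) /
             ((eig 1 (Smat (a t X) (b t X)) - eig 2 (Smat (a t X) (b t X)))*(eig 1 (Smat (a t X) (b t X)) - eig 3 (Smat (a t X) (b t X)))))) (at t)
     \<and> ((\<lambda>s. eig 2 (Smat (a s X) (b s X))) has_real_derivative
           (- Pdf (a t X) (b t X) (da t X) (db t X) (eig 2 (Smat (a t X) (b t X))) /
             ((eig 2 (Smat (a t X) (b t X)) - eig 1 (Smat (a t X) (b t X)))*(eig 2 (Smat (a t X) (b t X)) - eig 3 (Smat (a t X) (b t X)))))) (at t)"
    if "(t, X) \<in> U" "t > 0" for t X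
  proof -
    have tU: "t \<in> {-c<..<T}" "X \<in> W" using Umem[OF that(1)] by auto
    show ?thesis using point_analysis[OF dA[OF tU] dB[OF tU] good[OF that]] by simp
  qed
  show ?thesis
  proof (intro exI conjI)
    show "open U" "(0, Xbar) \<in> U" "U \<subseteq> {-c<..<T} \<times> W" by fact+
    show "\<forall>(t, X)\<in>U. t > 0 \<longrightarrow>
       (\<exists>D. ((\<lambda>s. eig 1 (Smat (a s X) (b s X))) has_real_derivative D) (at t)) \<and>
       (\<exists>D. ((\<lambda>s. eig 2 (Smat (a s X) (b s X))) has_real_derivative D) (at t))"
      using PA by blast
    show "\<forall>\<omega> (\<phi> :: real \<times> (real^'l) \<Rightarrow> real) C.
       \<omega> \<subseteq> U \<inter> {(t, X). t > 0} \<longrightarrow>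
       (\<forall>z\<in>\<omega>. \<phi> z > 0) \<longrightarrow>
       (\<exists>B. \<forall>z\<in>\<omega>. \<phi> z \<le> B) \<longrightarrow>
       C > 0 \<longrightarrow>
       (\<forall>(t, X)\<in>\<omega>.
          (\<phi> (t, X))^2 * a t X \<le> C * Delta (a t X) (b t X) \<and>
          \<phi> (t, X) * \<bar>deriv (\<lambda>s. Delta (a s X) (b s X)) t\<bar> \<le> C * Delta (a t X) (b t X) \<and>
          \<phi> (t, X) * \<bar>deriv (\<lambda>s. a s X) t\<bar> \<le> C * a t X) \<longrightarrow>
       (\<exists>C'>0. \<forall>(t, X)\<in>\<omega>.
          (\<phi> (t, X))^2 \<le> C' * eig 1 (Smat (a t X) (b t X)) \<and>
          \<phi> (t, X) * \<bar>deriv (\<lambda>s. eig 1 (Smat (a s X) (b s X))) t\<bar>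
             \<le> C' * eig 1 (Smat (a t X) (b t X)) \<and>
          \<phi> (t, X) * \<bar>deriv (\<lambda>s. eig 2 (Smat (a s X) (b s X))) t\<bar>
             \<le> C' * eig 2 (Smat (a t X) (b t X)))"
    proof (intro allI impI)
      fix \<omega> and \<phi> :: "real \<times> (real^'l) \<Rightarrow> real" and C :: real
      assume \<omega>U: "\<omega> \<subseteq> U \<inter> {(t, X). t > 0}" and \<phi>0: "\<forall>z\<in>\<omega>. \<phi> z > 0"
        and Bex: "\<exists>B. \<forall>z\<in>\<omega>. \<phi> z \<le> B" and C0: "C > 0"
        and hyp: "\<forall>(t, X)\<in>\<omega>.
          (\<phi> (t, X))^2 * a t X \<le> C * Delta (a t X) (b t X) \<and>
          \<phi> (t, X) * \<bar>deriv (\<lambda>s. Delta (a s X) (b s X)) t\<bar> \<le> C * Delta (a t X) (b t X) \<and>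
          \<phi> (t, X) * \<bar>deriv (\<lambda>s. a s X) t\<bar> \<le> C * a t X"
      obtain B where B: "\<And>z. z \<in> \<omega> \<Longrightarrow> \<phi> z \<le> B" using Bex by blast
      define K' where "K' = max K 0"
      have K'0: "0 \<le> K'" unfolding K'_def by simp
      have C'0: "22*C + 18*\<bar>B\<bar>*K' > 0" using C0 K'0 by (simp add: add_pos_nonneg)
      have main: "(\<phi> (t, X))^2 \<le> (22*C + 18*\<bar>B\<bar>*K') * eig 1 (Smat (a t X) (b t X)) \<and>
          \<phi> (t, X) * \<bar>deriv (\<lambda>s. eig 1 (Smat (a s X) (b s X))) t\<bar>
             \<le> (22*C + 18*\<bar>B\<bar>*K') * eig 1 (Smat (a t X) (b t X)) \<and>
          \<phi> (t, X) * \<bar>deriv (\<lambda>s. eig 2 (Smat (a s X) (b s X))) t\<bar>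
             \<le> (22*C + 18*\<bar>B\<bar>*K') * eig 2 (Smat (a t X) (b t X))"
        if tw: "(t, X) \<in> \<omega>" for t X
      proof -
        have tU: "(t, X) \<in> U" "t > 0" using tw \<omega>U by auto
        have tU2: "t \<in> {-c<..<T}" "X \<in> W" "a t X < 1/10" using Umem[OF tU(1)] by auto
        have at0: "0 < a t X" using a_pos[of t X] tU tU2 by auto
        have Dt: "Delta (a t X) (b t X) \<ge> 0" using Delta_nonneg[of t X] tU tU2 by auto
        note RL = roots_loc[OF at0 _ Dt]
        have RL': "0 \<le> eig 1 (Smat (a t X) (b t X)) \<and> eig 1 (Smat (a t X) (b t X)) \<le> (a t X)^2 \<and>
         a t X \<le> eig 2 (Smat (a t X) (b t X)) \<and> eig 2 (Smat (a t X) (b t X)) \<le> 3*a t X \<and>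
         2 \<le> eig 3 (Smat (a t X) (b t X)) \<and> eig 3 (Smat (a t X) (b t X)) \<le> 4 \<and>
         (\<forall>\<mu>. Pc (a t X) (b t X) \<mu> = (\<mu> - eig 1 (Smat (a t X) (b t X)))*(\<mu> - eig 2 (Smat (a t X) (b t X)))*(\<mu> - eig 3 (Smat (a t X) (b t X))))"
          using RL tU2 by simp
        have prod: "Delta (a t X) (b t X) = eig 1 (Smat (a t X) (b t X)) * eig 2 (Smat (a t X) (b t X)) * eig 3 (Smat (a t X) (b t X))"
        proof -
          have "Pc (a t X) (b t X) 0 = (0 - eig 1 (Smat (a t X) (b t X)))*(0 - eig 2 (Smat (a t X) (b t X)))*(0 - eig 3 (Smat (a t X) (b t X)))"
            using RL' by blast
          then show ?thesis unfolding Pc_def by simp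
        qed
        have dDelta: "((\<lambda>s. Delta (a s X) (b s X)) has_real_derivative
              12*(a t X)^2*da t X - 54*b t X*db t X) (at t)"
          unfolding Delta_def
          by (rule derivative_eq_intros refl dA[OF tU2(1,2)] dB[OF tU2(1,2)] | simp)+
        have d1: "deriv (\<lambda>s. Delta (a s X) (b s X)) t = 12*(a t X)^2*da t X - 54*b t X*db t X"
          using dDelta by (rule DERIV_imp_deriv)
        have d2: "deriv (\<lambda>s. a s X) t = da t X" using dA[OF tU2(1,2)] by (rule DERIV_imp_deriv)
        have d3: "deriv (\<lambda>s. eig 1 (Smat (a s X) (b s X))) t =
           (- Pdf (a t X) (b t X) (da t X) (db t X) (eig 1 (Smat (a t X) (b t X))) /
             ((eig 1 (Smat (a t X) (b t X)) - eig 2 (Smat (a t X) (b t X)))*(eig 1 (Smat (a t X) (b t X)) - eig 3 (Smat (a t X) (b t X)))))"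
          using PA[OF tU] by (intro DERIV_imp_deriv) blast
        have d4: "deriv (\<lambda>s. eig 2 (Smat (a s X) (b s X))) t =
           (- Pdf (a t X) (b t X) (da t X) (db t X) (eig 2 (Smat (a t X) (b t X))) /
             ((eig 2 (Smat (a t X) (b t X)) - eig 1 (Smat (a t X) (b t X)))*(eig 2 (Smat (a t X) (b t X)) - eig 3 (Smat (a t X) (b t X)))))"
          using PA[OF tU] by (intro DERIV_imp_deriv) blast
        have h: "(\<phi> (t, X))^2 * a t X \<le> C * Delta (a t X) (b t X)"
          "\<phi> (t, X) * \<bar>12*(a t X)^2*da t X - 54*b t X*db t X\<bar> \<le> C * Delta (a t X) (b t X)"
          "\<phi> (t, X) * \<bar>da t X\<bar> \<le> C * a t X"
          using hyp tw d1 d2 by auto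
        have Kt: "\<bar>db t X\<bar> \<le> K'" using K[of "(t, X)"] tU2 unfolding db_def \<Omega>_def K'_def by auto
        have p0: "0 < \<phi> (t, X)" using \<phi>0 tw by auto
        show ?thesis unfolding d3 d4
          using final_ineq[OF at0 _ Dt _ _ _ _ _ _ prod p0 B[OF tw] Kt C0 h] RL' tU2 by simp
      qed
      show "\<exists>C'>0. \<forall>(t, X)\<in>\<omega>.
          (\<phi> (t, X))^2 \<le> C' * eig 1 (Smat (a t X) (b t X)) \<and>
          \<phi> (t, X) * \<bar>deriv (\<lambda>s. eig 1 (Smat (a s X) (b s X))) t\<bar>
             \<le> C' * eig 1 (Smat (a t X) (b t X)) \<and>
          \<phi> (t, X) * \<bar>deriv (\<lambda>s. eig 2 (Smat (a s X) (b s X))) t\<bar>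
             \<le> C' * eig 2 (Smat (a t X) (b t X))"
        using C'0 main by blast
    qed
  qed
qed

end
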